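(* Let $m,k$ be positive integers with $m\ge4$ and $m>k+2$. For $z\in\mathbb{F}_{2^k}$ define $f^{(z)}:\mathbb{F}_{2^m}\times\mathbb{F}_{2^m}\to\mathbb{F}_2$ by $f^{(z)}(x_1,x_2)={\rm Tr}_1^m(x_1x_2^{2^m-2})$ if ${\rm Tr}_1^k(z)=0$ and $f^{(z)}(x_1,x_2)={\rm Tr}_1^m(x_2x_1^{2^m-2})$ if ${\rm Tr}_1^k(z)=1$. Then $f:\mathbb{F}_{2^m}\times\mathbb{F}_{2^m}\times\mathbb{F}_{2^k}\times\mathbb{F}_{2^k}\to\mathbb{F}_2$, $f(x_1,x_2,y,z)=f^{(z)}(x_1,x_2)+{\rm Tr}_1^k(yz)$, is a GMM function which is not in the class $MM^{\#}$.
   Context: ${\rm Tr}_a^b$ denotes the trace from $\mathbb{F}_{2^b}$ to $\mathbb{F}_{2^a}$. A GMM (generalized Maiorana–McFarland) function is one of the form $f(x,y,z)=f^{(z)}(x)+{\rm Tr}_1^k(yz)$ on $W\times\mathbb{F}_{2^k}\times\mathbb{F}_{2^k}$ with every $f^{(z)}$ bent on $W$. Two Boolean functions $f,g$ on an $\mathbb{F}_2$-space $X$ are EA-equivalent if $g(x)=f(L(x)+a)+\langle c,x\rangle+b$ with $L$ a linear permutation of $X$, $a,c\in X$, $b\in\mathbb{F}_2$. The Maiorana–McFarland class on $\mathbb{F}_{2^N}\times\mathbb{F}_{2^N}$ consists of functions ${\rm Tr}_1^N(x\pi(y))+g(y)$ with $\pi$ a permutation of $\mathbb{F}_{2^N}$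 and $g$ arbitrary; $MM^{\#}$ is the set of Boolean functions on a $2N$-dimensional $\mathbb{F}_2$-space EA-equivalent (after a linear identification with $\mathbb{F}_{2^N}^2$) to such a function. *)

theory Defs
  imports Main "HOL-Library.Product_Plus"
begin

text \<open>Finite fields F_{2^n} are modelled by a type of class field and finite with
  cardinality 2^n (unique up to isomorphism). Boolean functions take values in bool,
  with addition in F_2 being exclusive or (written as inequality of booleans).\<close>

definition Tr1 :: "nat \<Rightarrow> 'a::field \<Rightarrow> bool" where
  "Tr1 n x \<longleftrightarrow> (\<Sum>i<n. x ^ (2 ^ i)) = 1"

text \<open>F_2-linear maps between elementary abelian 2-groups are exactly the additive maps.\<close>
definition additive :: "('x::ab_group_add \<Rightarrow> 'y::ab_group_add) \<Rightarrow> bool" where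
  "additive L \<longleftrightarrow> (\<forall>u v. L (u + v) = L u + L v)"

text \<open>F_2-linear functionals X to F_2 (these are exactly the maps x |-> <c,x>).\<close>
definition lin_functional :: "('x::ab_group_add \<Rightarrow> bool) \<Rightarrow> bool" where
  "lin_functional l \<longleftrightarrow> (\<forall>u v. l (u + v) = (l u \<noteq> l v))"

definition walsh :: "('x::{ab_group_add,finite} \<Rightarrow> bool) \<Rightarrow> ('x \<Rightarrow> bool) \<Rightarrow> int" where
  "walsh f l = (\<Sum>x\<in>UNIV. if f x \<noteq> l x then -1 else 1)"

definition bent :: "('x::{ab_group_add,finite} \<Rightarrow> bool) \<Rightarrow> bool" where
  "bent f \<longleftrightarrow> (\<forall>l. lin_functional l \<longrightarrow> (walsh f l)^2 = int (card (UNIV :: 'x set)))"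

definition is_GMM :: "nat \<Rightarrow> ('w::{ab_group_add,finite} \<times> 'b::field \<times> 'b \<Rightarrow> bool) \<Rightarrow> bool" where
  "is_GMM k f \<longleftrightarrow> (\<exists>F :: 'b \<Rightarrow> 'w \<Rightarrow> bool. (\<forall>z. bent (F z)) \<and>
      (\<forall>w y z. f (w, y, z) = (F z w \<noteq> Tr1 k (y * z))))"

definition EA_equiv :: "('x::ab_group_add \<Rightarrow> bool) \<Rightarrow> ('x \<Rightarrow> bool) \<Rightarrow> bool" where
  "EA_equiv f g \<longleftrightarrow> (\<exists>L a l b. additive L \<and> bij L \<and> lin_functional l \<and>
      (\<forall>x. g x = ((f (L x + a) \<noteq> l x) \<noteq> b)))"

definition MM :: "nat \<Rightarrow> ('c::field \<times> 'c \<Rightarrow> bool) \<Rightarrow> bool" where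
  "MM N h \<longleftrightarrow> (\<exists>\<pi> g. bij \<pi> \<and> (\<forall>x y. h (x, y) = (Tr1 N (x * \<pi> y) \<noteq> g y)))"

text \<open>MM#: EA-equivalent, after a linear identification phi with F_{2^N}^2, to an MM function.
  The field F_{2^N} is given by the type 'c.\<close>
definition MM_sharp :: "nat \<Rightarrow> 'c::field itself \<Rightarrow> ('x::ab_group_add \<Rightarrow> bool) \<Rightarrow> bool" where
  "MM_sharp N T f \<longleftrightarrow> (\<exists>(\<phi> :: 'x \<Rightarrow> 'c \<times> 'c) h. additive \<phi> \<and> bij \<phi> \<and> MM N h \<and>
      EA_equiv f (h \<circ> \<phi>))"

definition fz :: "nat \<Rightarrow> nat \<Rightarrow> 'b::field \<Rightarrow> 'a::field \<times> 'a \<Rightarrow> bool" where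
  "fz m k z = (\<lambda>(x1, x2). if \<not> Tr1 k z then Tr1 m (x1 * x2 ^ (2 ^ m - 2))
                                       else Tr1 m (x2 * x1 ^ (2 ^ m - 2)))"

definition cor_f :: "nat \<Rightarrow> nat \<Rightarrow> ('a::field \<times> 'a) \<times> 'b::field \<times> 'b \<Rightarrow> bool" where
  "cor_f m k = (\<lambda>(x, y, z). fz m k z x \<noteq> Tr1 k (y * z))"

end

theory Submission
  imports Defs "HOL-Computational_Algebra.Polynomial"
begin


lemma ff_pow_card_minus1:
  fixes x :: "'a::{field,finite}"
  assumes "x \<noteq> 0"
  shows "x ^ (card (UNIV::'a set) - 1) = 1"
proof -
  let ?N = "UNIV - {0::'a}"
  have bij: "bij_betw ((*) x) ?N ?N"
    unfolding bij_betw_def inj_on_def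
  proof (intro conjI ballI impI)
    show "x * a = x * b \<Longrightarrow> a = b" for a b using assms by simp
    show "(*) x ` ?N = ?N"
    proof
      show "(*) x ` ?N \<subseteq> ?N" using assms by auto
      show "?N \<subseteq> (*) x ` ?N"
      proof
        fix y assume "y \<in> ?N"
        then have "y = x * (y / x)" "y / x \<in> ?N" using assms by auto
        then show "y \<in> (*) x ` ?N" by blast
      qed
    qed
  qed
  have "(\<Prod>y\<in>?N. x * y) = (\<Prod>y\<in>?N. y)"
    using prod.reindex_bij_betw[OF bij, of "\<lambda>y. y"] by simp
  moreover have "(\<Prod>y\<in>?N. x * y) = x ^ card ?N * (\<Prod>y\<in>?N. y)"
    by (simp add: prod.distrib)
  moreover have "(\<Prod>y\<in>?N. y) \<noteq> 0" by simp
  moreover have "card ?N = card (UNIV::'a set) - 1" by (simp add: card_Diff_singleton)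
  ultimately show ?thesis by simp
qed

lemma ff_pow_card:
  fixes x :: "'a::{field,finite}"
  shows "x ^ card (UNIV::'a set) = x"
proof (cases "x = 0")
  case True
  then show ?thesis by (simp add: card_gt_0_iff)
next
  case False
  have "card (UNIV::'a set) = Suc (card (UNIV::'a set) - 1)" using finite_UNIV_card_ge_0[where 'a='a] by simp
  then have "x ^ card (UNIV::'a set) = x * x ^ (card (UNIV::'a set) - 1)" by (metis power_Suc)
  then show ?thesis using ff_pow_card_minus1[OF False] by simp
qed

lemma ff_char2:
  assumes "card (UNIV::'a::{field,finite} set) = 2 ^ n" "n > 0"
  shows "(2::'a) = 0"
proof -
  have "odd (card (UNIV::'a set) - 1)" using assms by simp
  then have "(-1::'a) ^ (card (UNIV::'a set) - 1) = -1" by simp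
  moreover have "(-1::'a) ^ (card (UNIV::'a set) - 1) = 1" by (rule ff_pow_card_minus1) simp
  ultimately have "(-1::'a) = 1" by simp
  then have "(1::'a) + 1 = 0" by (metis add.right_inverse)
  then show ?thesis by simp
qed

lemma char2_add_self:
  fixes x :: "'a::field"
  assumes "(2::'a) = 0"
  shows "x + x = 0"
proof -
  have "x + x = 2 * x" by simp
  then show ?thesis using assms by simp
qed

lemma char2_minus:
  fixes x :: "'a::field"
  assumes "(2::'a) = 0"
  shows "- x = x"
  using char2_add_self[OF assms, of x] by (metis add_eq_0_iff2)

lemma char2_eq_iff:
  fixes x :: "'a::field"
  assumes "(2::'a) = 0"
  shows "x + y = 0 \<longleftrightarrow> x = y"
  using char2_minus[OF assms] by (metis add_eq_0_iff2)

lemma frob_add: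
  fixes x :: "'a::field"
  assumes "(2::'a) = 0"
  shows "(x + y) ^ (2 ^ i) = x ^ (2 ^ i) + y ^ (2 ^ i)"
proof (induction i)
  case 0
  then show ?case by simp
next
  case (Suc i)
  have "(x + y) ^ (2 ^ Suc i) = ((x + y) ^ (2 ^ i)) ^ 2"
    by (simp add: power_mult[symmetric] mult.commute)
  also have "\<dots> = (x ^ (2 ^ i) + y ^ (2 ^ i)) ^ 2" using Suc by simp
  also have "\<dots> = (x ^ (2 ^ i))^2 + (y ^ (2 ^ i))^2"
    using assms by (simp add: power2_sum)
  also have "\<dots> = x ^ (2 ^ Suc i) + y ^ (2 ^ Suc i)"
    by (simp add: power_mult[symmetric] mult.commute)
  finally show ?case .
qed

lemma sq_sum_char2:
  fixes f :: "'i \<Rightarrow> 'a::field"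
  assumes "(2::'a) = 0"
  shows "(\<Sum>i\<in>A. f i) ^ 2 = (\<Sum>i\<in>A. (f i) ^ 2)"
proof (induction A rule: infinite_finite_induct)
  case (insert x F)
  then show ?case using assms by (simp add: power2_sum)
qed simp_all

definition trv :: "nat \<Rightarrow> 'a::field \<Rightarrow> 'a" where
  "trv n x = (\<Sum>i<n. x ^ (2 ^ i))"

lemma Tr1_trv: "Tr1 n x \<longleftrightarrow> trv n x = 1"
  by (simp add: Tr1_def trv_def)

lemma trv_add:
  fixes x :: "'a::field"
  assumes "(2::'a) = 0"
  shows "trv n (x + y) = trv n x + trv n y"
  unfolding trv_def using frob_add[OF assms] by (simp add: sum.distrib)

lemma trv_01:
  fixes x :: "'a::{field,finite}"
  assumes "card (UNIV::'a set) = 2 ^ n" "n > 0"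
  shows "trv n x = 0 \<or> trv n x = 1"
proof -
  have c2: "(2::'a) = 0" by (rule ff_char2[OF assms])
  have "(trv n x) ^ 2 = (\<Sum>i<n. (x ^ (2 ^ i)) ^ 2)"
    unfolding trv_def by (rule sq_sum_char2[OF c2])
  also have "\<dots> = (\<Sum>i<n. x ^ (2 ^ Suc i))"
    by (simp add: power_mult[symmetric] mult.commute)
  also have "\<dots> = trv n x"
  proof -
    have "(\<Sum>i<Suc n. x ^ (2 ^ i)) = x ^ (2^0) + (\<Sum>i<n. x ^ (2 ^ Suc i))"
      by (rule sum.lessThan_Suc_shift)
    moreover have "(\<Sum>i<Suc n. x ^ (2 ^ i)) = trv n x + x ^ (2 ^ n)"
      by (simp add: trv_def)
    moreover have "x ^ (2 ^ n) = x" using ff_pow_card[of x] assms by simp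
    ultimately show ?thesis by simp
  qed
  finally have "trv n x * (trv n x - 1) = 0" by (simp add: power2_eq_square algebra_simps)
  then show ?thesis by auto
qed

lemma Tr1_add:
  fixes x :: "'a::{field,finite}"
  assumes "card (UNIV::'a set) = 2 ^ n" "n > 0"
  shows "Tr1 n (x + y) \<longleftrightarrow> (Tr1 n x \<noteq> Tr1 n y)"
proof -
  have c2: "(2::'a) = 0" by (rule ff_char2[OF assms])
  have "(1::'a) + 1 = 0" using c2 by simp
  then show ?thesis
    unfolding Tr1_trv trv_add[OF c2]
    using trv_01[OF assms, of x] trv_01[OF assms, of y] by auto
qed

lemma Tr1_zero: "n > 0 \<Longrightarrow> \<not> Tr1 n (0::'a::field)"
  by (simp add: Tr1_def power_0_left)

lemma Tr1_exists:
  fixes x :: "'a::{field,finite}"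
  assumes "card (UNIV::'a set) = 2 ^ n" "n > 0"
  shows "\<exists>s::'a. Tr1 n s"
proof (rule ccontr)
  assume "\<not> ?thesis"
  then have z: "trv n s = 0" for s :: 'a using trv_01[OF assms, of s] by (auto simp: Tr1_trv)
  define p :: "'a poly" where "p = (\<Sum>i<n. monom 1 (2 ^ i))"
  have pv: "poly p x = trv n x" for x by (simp add: p_def poly_sum poly_monom trv_def)
  have cf: "coeff p j = (\<Sum>i<n. if 2 ^ i = j then 1 else 0)" for j
    by (simp add: p_def coeff_sum coeff_monom)
  have "coeff p (2 ^ (n - 1)) = (\<Sum>i\<in>{n-1}. 1)"
    unfolding cf by (rule sum.mono_neutral_cong_right) (use assms in auto)
  then have "p \<noteq> 0" by auto
  have "degree p \<le> 2 ^ (n - 1)"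
  proof (rule degree_le, intro allI impI)
    fix j :: nat assume j: "2 ^ (n - 1) < j"
    have "2 ^ i \<noteq> j" if "i < n" for i :: nat
    proof -
      have "(2::nat) ^ i \<le> 2 ^ (n - 1)" using that by (intro power_increasing) auto
      then show ?thesis using j by auto
    qed
    then show "coeff p j = 0" unfolding cf by (intro sum.neutral) auto
  qed
  moreover have "card {x. poly p x = 0} \<le> degree p" by (rule card_poly_roots_bound) fact
  moreover have "{x. poly p x = 0} = UNIV" using z pv by auto
  ultimately have "(2::nat) ^ n \<le> 2 ^ (n - 1)" using assms by (metis card_UNIV_unit le_trans)
  then show False using assms by (metis power_strict_increasing_iff diff_less less_numeral_extra(1) linorder_not_le one_less_numeral_iff semiring_norm(76))
qed


definition sg :: "bool \<Rightarrow> int" where "sg b = (if b then -1 else 1)"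

lemma sg_xor: "sg (a \<noteq> b) = sg a * sg b" by (simp add: sg_def)
lemma sg_sq: "sg a * sg a = 1" by (simp add: sg_def)

lemma lin_zero: "lin_functional l \<Longrightarrow> \<not> l 0"
  unfolding lin_functional_def by (metis add_0)

lemma bij_add_right: "bij (\<lambda>x::'x::ab_group_add. x + u)"
  by (auto simp: bij_def inj_def surj_def)

lemma char_sum:
  fixes l :: "'x::{ab_group_add,finite} \<Rightarrow> bool"
  assumes "lin_functional l"
  shows "(\<Sum>x\<in>UNIV. sg (l x)) = (if \<forall>x. \<not> l x then int (card (UNIV::'x set)) else 0)"
proof (cases "\<forall>x. \<not> l x")
  case True
  then show ?thesis by (simp add: sg_def)
next
  case False
  then obtain u where u: "l u" by auto
  have "(\<Sum>x\<in>UNIV. sg (l (x + u))) = (\<Sum>x\<in>UNIV. sg (l x))"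
    using sum.reindex_bij_betw[OF bij_add_right[of u], of "\<lambda>x. sg (l x)"] by simp
  moreover have "sg (l (x + u)) = - sg (l x)" for x
    using assms u unfolding lin_functional_def sg_def by auto
  ultimately have "(\<Sum>x\<in>UNIV. sg (l x)) = - (\<Sum>x\<in>UNIV. sg (l x))"
    by (simp add: sum_negf)
  then show ?thesis using False by simp
qed

lemma walsh_sg: "walsh f l = (\<Sum>x\<in>UNIV. sg (f x \<noteq> l x))"
  unfolding walsh_def sg_def by simp

lemma tr_lin:
  fixes c :: "'a::{field,finite}"
  assumes "card (UNIV::'a set) = 2 ^ n" "n > 0"
  shows "lin_functional (\<lambda>x. Tr1 n (x * c))"
  unfolding lin_functional_def using Tr1_add[OF assms] by (simp add: distrib_right)

lemma tr_nondeg: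
  fixes c :: "'a::{field,finite}"
  assumes "card (UNIV::'a set) = 2 ^ n" "n > 0" "\<forall>x. \<not> Tr1 n (x * c)"
  shows "c = 0"
proof (rule ccontr)
  assume "c \<noteq> 0"
  obtain s :: 'a where "Tr1 n s" using Tr1_exists[OF assms(1,2)] by auto
  moreover have "s = (s / c) * c" using \<open>c \<noteq> 0\<close> by simp
  ultimately show False using assms(3) by metis
qed

lemma tr_inj:
  fixes c d :: "'a::{field,finite}"
  assumes "card (UNIV::'a set) = 2 ^ n" "n > 0" "\<forall>x. Tr1 n (x * c) = Tr1 n (x * d)"
  shows "c = d"
proof -
  have "\<forall>x. \<not> Tr1 n (x * (c - d))"
  proof
    fix x
    have "Tr1 n (x * c) = (Tr1 n (x * (c - d)) \<noteq> Tr1 n (x * d))"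
      using Tr1_add[OF assms(1,2), of "x * (c - d)" "x * d"] by (simp add: algebra_simps)
    then show "\<not> Tr1 n (x * (c - d))" using assms(3) by auto
  qed
  then have "c - d = 0" by (rule tr_nondeg[OF assms(1,2)])
  then show ?thesis by simp
qed

lemma tr_rep:
  fixes l :: "'a::{field,finite} \<Rightarrow> bool"
  assumes "card (UNIV::'a set) = 2 ^ n" "n > 0" "lin_functional l"
  shows "\<exists>c. \<forall>x. Tr1 n (x * c) = l x"
proof (rule ccontr)
  assume nc: "\<not> ?thesis"
  let ?N = "int (card (UNIV::'a set))"
  have lc: "lin_functional (\<lambda>x. Tr1 n (x * c) \<noteq> l x)" for c
    using tr_lin[OF assms(1,2), of c] assms(3) unfolding lin_functional_def by auto
  have "(\<Sum>c\<in>UNIV. \<Sum>x\<in>UNIV. sg (Tr1 n (x * c) \<noteq> l x)) = (\<Sum>c\<in>(UNIV::'a set). 0)"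
  proof (rule sum.cong)
    fix c :: 'a
    show "(\<Sum>x\<in>UNIV. sg (Tr1 n (x * c) \<noteq> l x)) = 0"
      using char_sum[OF lc[of c]] nc by auto
  qed simp
  moreover have "(\<Sum>c\<in>UNIV. \<Sum>x\<in>UNIV. sg (Tr1 n (x * c) \<noteq> l x))
      = (\<Sum>x\<in>UNIV. sg (l x) * (\<Sum>c\<in>UNIV. sg (Tr1 n (x * c))))"
  proof -
    have "(\<Sum>c\<in>UNIV. \<Sum>x\<in>UNIV. sg (Tr1 n (x * c) \<noteq> l x))
        = (\<Sum>c\<in>UNIV. \<Sum>x\<in>UNIV. sg (l x) * sg (Tr1 n (x * c)))"
      by (intro sum.cong refl) (auto simp: sg_def)
    also have "\<dots> = (\<Sum>x\<in>UNIV. \<Sum>c\<in>UNIV. sg (l x) * sg (Tr1 n (x * c)))"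
      by (rule sum.swap)
    also have "\<dots> = (\<Sum>x\<in>UNIV. sg (l x) * (\<Sum>c\<in>UNIV. sg (Tr1 n (x * c))))"
      by (simp add: sum_distrib_left)
    finally show ?thesis .
  qed
  moreover have "(\<Sum>c\<in>UNIV. sg (Tr1 n (x * c))) = (if x = 0 then ?N else 0)" for x :: 'a
  proof -
    have "lin_functional (\<lambda>c. Tr1 n (x * c))"
      using tr_lin[OF assms(1,2), of x] by (simp add: mult.commute)
    note eq = char_sum[OF this]
    have iff: "(\<forall>c. \<not> Tr1 n (x * c)) \<longleftrightarrow> x = 0"
    proof
      assume "\<forall>c. \<not> Tr1 n (x * c)"
      then have "\<forall>c. \<not> Tr1 n (c * x)" by (simp add: mult.commute)
      then show "x = 0" by (rule tr_nondeg[OF assms(1,2)])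
    next
      assume "x = 0"
      then show "\<forall>c. \<not> Tr1 n (x * c)" using Tr1_zero[OF assms(2)] by simp
    qed
    show ?thesis unfolding eq iff by (rule refl)
  qed
  ultimately have "(\<Sum>x\<in>(UNIV::'a set). sg (l x) * (if x = 0 then ?N else 0)) = 0" by simp
  moreover have "(\<Sum>x\<in>(UNIV::'a set). sg (l x) * (if x = 0 then ?N else 0)) = sg (l 0) * ?N"
    by (simp add: if_distrib[of "\<lambda>t. sg (l _) * t"] sum.delta cong: if_cong)
  ultimately show False using lin_zero[OF assms(3)] by (simp add: sg_def)
qed

lemma bent_MM:
  fixes \<pi> :: "'a::{field,finite} \<Rightarrow> 'a"
  assumes "card (UNIV::'a set) = 2 ^ n" "n > 0" "bij \<pi>"
  shows "bent (\<lambda>(x1, x2). Tr1 n (x1 * \<pi> x2))"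
  unfolding bent_def
proof (intro allI impI)
  fix l :: "'a \<times> 'a \<Rightarrow> bool"
  assume ll: "lin_functional l"
  define l1 where "l1 x = l (x, 0)" for x
  define l2 where "l2 y = l (0, y)" for y
  have lsplit: "l (x, y) = (l1 x \<noteq> l2 y)" for x y
  proof -
    have "(x, y) = (x, 0) + (0, y)" by simp
    then show ?thesis using ll unfolding lin_functional_def l1_def l2_def by metis
  qed
  have l1l: "lin_functional l1" unfolding lin_functional_def l1_def
  proof (intro allI)
    fix u v :: 'a
    have "(u + v, 0::'a) = (u, 0) + (v, 0)" by simp
    then show "l (u + v, 0) = (l (u, 0) \<noteq> l (v, 0))" using ll unfolding lin_functional_def by metis
  qed
  obtain c where c: "\<forall>x. Tr1 n (x * c) = l1 x" using tr_rep[OF assms(1,2) l1l] by auto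
  define y0 where "y0 = inv \<pi> c"
  have py0: "\<pi> y = c \<longleftrightarrow> y = y0" for y
    unfolding y0_def using assms(3) by (metis bij_inv_eq_iff)
  let ?N = "int (card (UNIV::'a set))"
  have inner: "(\<Sum>x\<in>UNIV. sg (Tr1 n (x * \<pi> y) \<noteq> l1 x)) = (if y = y0 then ?N else 0)" for y
  proof -
    have lc: "lin_functional (\<lambda>x. Tr1 n (x * \<pi> y) \<noteq> l1 x)"
      using tr_lin[OF assms(1,2), of "\<pi> y"] l1l unfolding lin_functional_def by auto
    have "(\<forall>x. \<not> (Tr1 n (x * \<pi> y) \<noteq> l1 x)) \<longleftrightarrow> \<pi> y = c"
      using tr_inj[OF assms(1,2), of "\<pi> y" c] c by auto
    then show ?thesis using char_sum[OF lc] py0 by simp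
  qed
  have "walsh (\<lambda>(x1, x2). Tr1 n (x1 * \<pi> x2)) l
      = (\<Sum>x\<in>UNIV. \<Sum>y\<in>UNIV. sg (Tr1 n (x * \<pi> y) \<noteq> l (x, y)))"
    unfolding walsh_sg UNIV_Times_UNIV[symmetric] sum.cartesian_product by (simp add: split_def)
  also have "\<dots> = (\<Sum>y\<in>UNIV. \<Sum>x\<in>UNIV. sg (Tr1 n (x * \<pi> y) \<noteq> l (x, y)))"
    by (rule sum.swap)
  also have "\<dots> = (\<Sum>y\<in>UNIV. sg (l2 y) * (\<Sum>x\<in>UNIV. sg (Tr1 n (x * \<pi> y) \<noteq> l1 x)))"
    unfolding sum_distrib_left by (intro sum.cong refl) (auto simp: lsplit sg_def)
  also have "\<dots> = (\<Sum>y\<in>UNIV. sg (l2 y) * (if y = y0 then ?N else 0))"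
    by (simp only: inner)
  also have "\<dots> = sg (l2 y0) * ?N"
    by (simp add: if_distrib[of "\<lambda>t. sg (l2 _) * t"] sum.delta cong: if_cong)
  finally have "walsh (\<lambda>(x1, x2). Tr1 n (x1 * \<pi> x2)) l ^ 2 = ?N * ?N"
    by (simp add: power2_eq_square sg_def)
  then show "walsh (\<lambda>(x1, x2). Tr1 n (x1 * \<pi> x2)) l ^ 2 = int (card (UNIV :: ('a \<times> 'a) set))"
    by (simp add: UNIV_Times_UNIV[symmetric] card_cartesian_product del: UNIV_Times_UNIV)
qed

lemma bent_swap:
  fixes g :: "'x::{ab_group_add,finite} \<times> 'x \<Rightarrow> bool"
  assumes "bent g"
  shows "bent (\<lambda>(x1, x2). g (x2, x1))"
  unfolding bent_def
proof (intro allI impI)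
  fix l :: "'x \<times> 'x \<Rightarrow> bool"
  assume ll: "lin_functional l"
  have ll': "lin_functional (l \<circ> prod.swap)"
    using ll unfolding lin_functional_def by (simp add: prod.swap_def)
  have "walsh (\<lambda>(x1, x2). g (x2, x1)) l = walsh g (l \<circ> prod.swap)"
  proof -
    have "walsh g (l \<circ> prod.swap) = (\<Sum>q\<in>UNIV. sg (g q \<noteq> l (prod.swap q)))"
      by (simp add: walsh_sg)
    also have "\<dots> = (\<Sum>p\<in>UNIV. sg (g (prod.swap p) \<noteq> l (prod.swap (prod.swap p))))"
      using sum.reindex_bij_betw[OF bij_swap, of "\<lambda>q. sg (g q \<noteq> l (prod.swap q))"] by simp
    also have "\<dots> = walsh (\<lambda>(x1, x2). g (x2, x1)) l"
      unfolding walsh_sg by (intro sum.cong refl) (auto simp: prod.swap_def split_def)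
    finally show ?thesis by simp
  qed
  then show "walsh (\<lambda>(x1, x2). g (x2, x1)) l ^ 2 = int (card (UNIV :: ('x \<times> 'x) set))"
    using assms ll' unfolding bent_def by simp
qed


lemma pow_inv:
  fixes x :: "'a::{field,finite}"
  assumes "card (UNIV::'a set) = 2 ^ m" "m \<ge> 2"
  shows "x ^ (2 ^ m - 2) = inverse x"
proof -
  have m4: "(4::nat) \<le> 2 ^ m"
    using power_increasing[OF assms(2), of "2::nat"] by simp
  show ?thesis
  proof (cases "x = 0")
    case True
    then show ?thesis using m4 by (simp add: power_0_left)
  next
    case False
    have "x ^ (2 ^ m - 1) = 1" using ff_pow_card_minus1[OF False] assms by simp
    moreover have "(2::nat) ^ m - 1 = Suc (2 ^ m - 2)" using m4 by simp
    ultimately have "x * x ^ (2 ^ m - 2) = 1" by simp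
    then show ?thesis using False by (metis inverse_unique)
  qed
qed

lemma bij_inverse: "bij (inverse :: 'a::field \<Rightarrow> 'a)"
  by (rule o_bij[of inverse]) (auto simp: fun_eq_iff)

lemma char2_poly:
  fixes y u v :: "'a::field"
  assumes "(2::'a) = 0"
  shows "(y+u)*(y+v)*(y+u+v) + y*(y+v)*(y+u+v) + y*(y+u)*(y+u+v) + y*(y+u)*(y+v) = u*v*(u+v)"
proof -
  have "(y+u)*(y+v)*(y+u+v) + y*(y+v)*(y+u+v) + y*(y+u)*(y+u+v) + y*(y+u)*(y+v) - u*v*(u+v)
     = 2 * (2*y^3 + 3*y^2*u + 3*y^2*v + y*u^2 + 3*y*u*v + y*v^2)"
    by algebra
  then show ?thesis using assms by simp
qed

lemma DD_inv:
  fixes p q u v :: "'a::{field,finite}"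
  assumes c: "card (UNIV::'a set) = 2 ^ n" and n: "n \<ge> 3"
    and dd: "\<forall>x y. ((Tr1 n (x * inverse y) \<noteq> Tr1 n ((x+p) * inverse (y+u)))
         = (Tr1 n ((x+q) * inverse (y+v)) \<noteq> Tr1 n ((x+p+q) * inverse (y+u+v))))"
  shows "u = 0 \<or> v = 0 \<or> u = v"
proof (rule ccontr)
  assume "\<not> ?thesis"
  then have u: "u \<noteq> 0" and v: "v \<noteq> 0" and uv: "u \<noteq> v" by auto
  have n0: "n > 0" using n by simp
  have c2: "(2::'a) = 0" by (rule ff_char2[OF c n0])
  define cc where "cc y = inverse y + inverse (y+u) + inverse (y+v) + inverse (y+u+v)" for y
  have T: "Tr1 n (a + b) = (Tr1 n a \<noteq> Tr1 n b)" for a b :: 'a by (rule Tr1_add[OF c n0])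
  have ccz: "cc y = 0" for y
  proof -
    have "\<forall>x. \<not> Tr1 n (x * cc y)"
    proof
      fix x
      note h1 = dd[rule_format, of x y]
      note h0 = dd[rule_format, of 0 y]
      show "\<not> Tr1 n (x * cc y)"
        using h1 h0 Tr1_zero[OF n0, where 'a='a]
        by (simp add: cc_def distrib_left distrib_right T add.assoc; argo)
    qed
    then show ?thesis by (rule tr_nondeg[OF c n0])
  qed
  have "card {0, u, v, u+v} < card (UNIV::'a set)"
  proof -
    have "card (set [0, u, v, u+v]) \<le> length [0, u, v, u+v]" by (rule card_length)
    then have "card {0, u, v, u+v} \<le> 4" by simp
    moreover have "(8::nat) \<le> 2 ^ n" using power_increasing[OF n, of "2::nat"] by simp
    ultimately show ?thesis using c by simp
  qed
  then obtain y where y: "y \<notin> {0, u, v, u+v}"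
  proof -
    assume r: "\<And>y. y \<notin> {0, u, v, u+v} \<Longrightarrow> thesis"
    have "\<not> UNIV \<subseteq> {0, u, v, u+v}"
    proof
      assume "UNIV \<subseteq> {0, u, v, u+v}"
      then have "card (UNIV::'a set) \<le> card {0, u, v, u+v}" by (intro card_mono) auto
      then show False using \<open>card {0, u, v, u+v} < card (UNIV::'a set)\<close> by simp
    qed
    then show thesis using r by blast
  qed
  have nz: "y \<noteq> 0" "y + u \<noteq> 0" "y + v \<noteq> 0" "y + u + v \<noteq> 0"
    using y char2_eq_iff[OF c2] by (auto simp: add.assoc) 
  define D where "D = y*(y+u)*(y+v)*(y+u+v)"
  have ic: "a \<noteq> 0 \<Longrightarrow> inverse a * (a * b) = b" for a b :: 'a
    by (simp add: mult.assoc[symmetric])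
  have D1: "D = y * ((y+u)*(y+v)*(y+u+v))" by (simp add: D_def ac_simps)
  have D2: "D = (y+u) * (y*(y+v)*(y+u+v))" by (simp add: D_def ac_simps)
  have D3: "D = (y+v) * (y*(y+u)*(y+u+v))" by (simp add: D_def ac_simps)
  have D4: "D = (y+u+v) * (y*(y+u)*(y+v))" by (simp add: D_def ac_simps)
  have "cc y * D = inverse y * D + inverse (y+u) * D + inverse (y+v) * D + inverse (y+u+v) * D"
    unfolding cc_def by (simp add: distrib_right)
  also have "\<dots> = (y+u)*(y+v)*(y+u+v) + y*(y+v)*(y+u+v) + y*(y+u)*(y+u+v) + y*(y+u)*(y+v)"
    using ic[OF nz(1)] ic[OF nz(2)] ic[OF nz(3)] ic[OF nz(4)]
    by (metis D1 D2 D3 D4)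
  also have "\<dots> = u*v*(u+v)" by (rule char2_poly[OF c2])
  finally have "u*v*(u+v) = 0" using ccz by simp
  moreover have "u + v \<noteq> 0" using uv char2_eq_iff[OF c2] by simp
  ultimately show False using u v by simp
qed


lemma fz_0:
  assumes "card (UNIV::'a::{field,finite} set) = 2 ^ m" "m \<ge> 2" "\<not> Tr1 k z"
  shows "(fz m k z :: 'a \<times> 'a \<Rightarrow> bool) = (\<lambda>(x1, x2). Tr1 m (x1 * inverse x2))"
  using assms by (auto simp: fz_def fun_eq_iff pow_inv[OF assms(1,2)])

lemma fz_1:
  assumes "card (UNIV::'a::{field,finite} set) = 2 ^ m" "m \<ge> 2" "Tr1 k z"
  shows "(fz m k z :: 'a \<times> 'a \<Rightarrow> bool) = (\<lambda>(x1, x2). Tr1 m (x2 * inverse x1))"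
  using assms by (auto simp: fz_def fun_eq_iff pow_inv[OF assms(1,2)])

lemma GMM_part:
  assumes cA: "card (UNIV::'a::{field,finite} set) = 2 ^ m" and m: "m \<ge> 2"
  shows "is_GMM k (cor_f m k :: ('a \<times> 'a) \<times> 'b::field \<times> 'b \<Rightarrow> bool)"
  unfolding is_GMM_def
proof (intro exI[of _ "fz m k"] conjI allI)
  have m0: "m > 0" using m by simp
  have b0: "bent ((\<lambda>(x1, x2). Tr1 m (x1 * inverse x2)) :: 'a \<times> 'a \<Rightarrow> bool)"
    by (rule bent_MM[OF cA m0 bij_inverse])
  have b1: "bent ((\<lambda>(x1, x2). Tr1 m (x2 * inverse x1)) :: 'a \<times> 'a \<Rightarrow> bool)"
    using bent_swap[OF b0] by simp
  fix z :: 'b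
  show "bent (fz m k z :: 'a \<times> 'a \<Rightarrow> bool)"
    using fz_0[OF cA m, of k z] fz_1[OF cA m, of k z] b0 b1 by (cases "Tr1 k z") auto
next
  fix w :: "'a \<times> 'a" and y z :: 'b
  show "cor_f m k (w, y, z) = (fz m k z w \<noteq> Tr1 k (y * z))" by (simp add: cor_f_def)
qed

lemma additive_diff: "Defs.additive L \<Longrightarrow> L (u - v) = L u - L v"
  unfolding Defs.additive_def by (metis add_diff_cancel diff_add_cancel eq_diff_eq)

lemma card_le2:
  fixes S :: "'a::zero set"
  assumes "\<forall>u\<in>S. \<forall>v\<in>S. u = 0 \<or> v = 0 \<or> u = v"
  shows "card S \<le> 2"
proof (cases "\<exists>s\<in>S. s \<noteq> 0")
  case True
  then obtain s where s: "s \<in> S" "s \<noteq> 0" by auto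
  have "S \<subseteq> {0, s}" using assms s by blast
  then have "card S \<le> card {0, s}" by (intro card_mono) auto
  also have "\<dots> \<le> 2" by (simp add: card_insert_if)
  finally show ?thesis .
next
  case False
  then have "S \<subseteq> {0}" by blast
  then have "card S \<le> card {0::'a}" by (intro card_mono) auto
  then show ?thesis by simp
qed


lemma not_MMs:
  fixes m k :: nat
  assumes cA: "card (UNIV :: 'a::{field,finite} set) = 2 ^ m"
    and cB: "card (UNIV :: 'b::{field,finite} set) = 2 ^ k"
    and cC: "card (UNIV :: 'c::{field,finite} set) = 2 ^ (m + k)"
    and k0: "k > 0" and m4: "m \<ge> 4" and mk: "m > k + 2"
  shows "\<not> MM_sharp (m + k) TYPE('c) (cor_f m k :: ('a \<times> 'a) \<times> 'b \<times> 'b \<Rightarrow> bool)"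
proof
  let ?f = "cor_f m k :: ('a \<times> 'a) \<times> 'b \<times> 'b \<Rightarrow> bool"
  assume "MM_sharp (m + k) TYPE('c) ?f"
  then obtain \<phi> :: "('a \<times> 'a) \<times> 'b \<times> 'b \<Rightarrow> 'c \<times> 'c" and h where
    \<phi>a: "Defs.additive \<phi>" and \<phi>b: "bij \<phi>" and hMM: "MM (m + k) h" and ea: "EA_equiv ?f (h \<circ> \<phi>)"
    unfolding MM_sharp_def by blast
  from hMM obtain \<pi>' g where hdef: "\<forall>x y. h (x, y) = (Tr1 (m + k) (x * \<pi>' y) \<noteq> g y)"
    unfolding MM_def by blast
  from ea obtain L a0 l b where La: "Defs.additive L" and Lb: "bij L" and ll: "lin_functional l"
    and eqv: "\<forall>x. (h \<circ> \<phi>) x = ((?f (L x + a0) \<noteq> l x) \<noteq> b)"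
    unfolding EA_equiv_def by blast
  have mk0: "m + k > 0" using k0 by simp
  have TC: "Tr1 (m+k) (a + c) = (Tr1 (m+k) a \<noteq> Tr1 (m+k) c)" for a c :: 'c
    by (rule Tr1_add[OF cC mk0])
  define E where "E = {e. snd (\<phi> e) = 0}"
  have hdd: "(h (\<phi> x) \<noteq> h (\<phi> (x + e1))) = (h (\<phi> (x + e2)) \<noteq> h (\<phi> (x + e1 + e2)))"
    if ee: "e1 \<in> E" "e2 \<in> E" for x e1 e2
  proof -
    obtain s t where st: "\<phi> x = (s, t)" by fastforce
    obtain s1 where s1: "\<phi> e1 = (s1, 0)" using ee(1) unfolding E_def by (metis prod.collapse mem_Collect_eq)
    obtain s2 where s2: "\<phi> e2 = (s2, 0)" using ee(2) unfolding E_def by (metis prod.collapse mem_Collect_eq)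
    have p1: "\<phi> (x + e1) = (s + s1, t)" using \<phi>a[unfolded Defs.additive_def, rule_format, of x e1] st s1 by simp
    have p2: "\<phi> (x + e2) = (s + s2, t)" using \<phi>a[unfolded Defs.additive_def, rule_format, of x e2] st s2 by simp
    have p3: "\<phi> (x + e1 + e2) = (s + s1 + s2, t)" using \<phi>a[unfolded Defs.additive_def, rule_format, of "x + e1" e2] p1 s2 by simp
    show ?thesis unfolding p1 p2 p3 st by (simp add: hdef distrib_right TC; argo)
  qed
  have hf: "h (\<phi> y) = ((?f (L y + a0) \<noteq> l y) \<noteq> b)" for y using eqv[rule_format, of y] by simp
  have fdd: "(?f (L x + a0) \<noteq> ?f (L (x + e1) + a0)) = (?f (L (x + e2) + a0) \<noteq> ?f (L (x + e1 + e2) + a0))"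
    if ff: "e1 \<in> E" "e2 \<in> E" for x e1 e2
  proof -
    have lx: "l (x + e1) = (l x \<noteq> l e1)" "l (x + e2) = (l x \<noteq> l e2)"
      "l (x + e1 + e2) = ((l x \<noteq> l e1) \<noteq> l e2)"
      using ll[unfolded lin_functional_def, rule_format, of x e1]
        ll[unfolded lin_functional_def, rule_format, of x e2]
        ll[unfolded lin_functional_def, rule_format, of "x + e1" e2] by simp_all
    show ?thesis using hdd[OF that, of x] unfolding hf lx by argo
  qed
  define V where "V = L ` E"
  have Vdd: "(?f w \<noteq> ?f (w + e1)) = (?f (w + e2) \<noteq> ?f (w + e1 + e2))"
    if vv: "e1 \<in> V" "e2 \<in> V" for w e1 e2
  proof -
    obtain d1 where d1: "d1 \<in> E" "e1 = L d1" using vv(1) V_def by auto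
    obtain d2 where d2: "d2 \<in> E" "e2 = L d2" using vv(2) V_def by auto
    define x where "x = inv L (w - a0)"
    have Lx: "L x = w - a0" unfolding x_def using Lb by (simp add: bij_is_surj surj_f_inv_f)
    have q0: "L x + a0 = w" using Lx by simp
    have q1: "L (x + d1) + a0 = w + e1" using La Lx d1 by (simp add: La[unfolded Defs.additive_def, rule_format] algebra_simps)
    have q2: "L (x + d2) + a0 = w + e2" using La Lx d2 by (simp add: La[unfolded Defs.additive_def, rule_format] algebra_simps)
    have q3: "L (x + d1 + d2) + a0 = w + e1 + e2" using La Lx d1 d2
      by (simp add: La[unfolded Defs.additive_def, rule_format] algebra_simps)
    show ?thesis using fdd[OF d1(1) d2(1), of x] unfolding q0 q1 q2 q3 .
  qed
  have Vsub: "e - e' \<in> V" if vs: "e \<in> V" "e' \<in> V" for e e'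
  proof -
    obtain d where d: "d \<in> E" "e = L d" using vs(1) V_def by auto
    obtain d' where d': "d' \<in> E" "e' = L d'" using vs(2) V_def by auto
    have "d - d' \<in> E" using d(1) d'(1) additive_diff[OF \<phi>a, of d d'] unfolding E_def by simp
    moreover have "e - e' = L (d - d')" using d d' additive_diff[OF La] by simp
    ultimately show ?thesis unfolding V_def by blast
  qed
  have cardV: "card V = 2 ^ (m + k)"
  proof -
    have "card V = card E" unfolding V_def
      by (rule card_image) (rule inj_on_subset[OF bij_is_inj[OF Lb] subset_UNIV])
    also have "\<dots> = card (\<phi> ` E)"
      by (rule card_image[symmetric]) (rule inj_on_subset[OF bij_is_inj[OF \<phi>b] subset_UNIV])
    also have "\<phi> ` E = (\<lambda>u. (u, 0)) ` (UNIV :: 'c set)"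
    proof
      show "\<phi> ` E \<subseteq> (\<lambda>u. (u, 0)) ` UNIV"
      proof
        fix p :: "'c \<times> 'c" assume "p \<in> \<phi> ` E"
        then have "snd p = 0" unfolding E_def by blast
        then have "p = (fst p, 0)" by (simp add: prod_eq_iff)
        then show "p \<in> (\<lambda>u. (u, 0)) ` UNIV" by blast
      qed
      show "(\<lambda>u. (u, 0)) ` UNIV \<subseteq> \<phi> ` E"
      proof
        fix p :: "'c \<times> 'c" assume "p \<in> (\<lambda>u. (u, 0::'c)) ` UNIV"
        then have "snd p = 0" by auto
        moreover have "p = \<phi> (inv \<phi> p)" using \<phi>b by (simp add: bij_is_surj surj_f_inv_f)
        moreover have "inv \<phi> p \<in> E" unfolding E_def using calculation by simp
        ultimately show "p \<in> \<phi> ` E" by (metis image_eqI)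
      qed
    qed
    also have "card ((\<lambda>u. (u, 0::'c)) ` (UNIV :: 'c set)) = card (UNIV :: 'c set)"
      by (rule card_image) (auto simp: inj_on_def)
    finally show ?thesis using cC by simp
  qed
  have "\<exists>q. 2 ^ (m - k) \<le> card {e \<in> V. snd e = q}"
  proof (rule ccontr)
    assume "\<not> ?thesis"
    then have lt0: "card {e \<in> V. snd e = q} < 2 ^ (m - k)" for q using not_le by blast
    have lt: "card {e \<in> V. snd e = q} \<le> 2 ^ (m - k) - 1" for q
      using lt0[of q] by linarith
    have Veq: "V = (\<Union>q\<in>UNIV. {e \<in> V. snd e = q})" by blast
    have "card (\<Union>q\<in>UNIV. {e \<in> V. snd e = q}) \<le> (\<Sum>q\<in>UNIV. card {e \<in> V. snd e = q})"
      by (rule card_UN_le) simp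
    then have c1: "card V \<le> (\<Sum>q\<in>UNIV. card {e \<in> V. snd e = q})" using Veq by simp
    have c2: "(\<Sum>q\<in>UNIV. card {e \<in> V. snd e = q}) \<le> (\<Sum>q\<in>(UNIV::('b \<times> 'b) set). 2 ^ (m - k) - 1)"
      by (rule sum_mono) (rule lt)
    have cBB: "card (UNIV::('b \<times> 'b) set) = 2 ^ k * 2 ^ k"
      using card_cartesian_product[of "UNIV::'b set" "UNIV::'b set"] cB by simp
    have c3: "(\<Sum>q\<in>(UNIV::('b \<times> 'b) set). 2 ^ (m - k) - 1) = 2 ^ k * 2 ^ k * (2 ^ (m - k) - (1::nat))"
      unfolding sum_constant cBB by simp
    have ineq: "2 ^ (m + k) \<le> 2 ^ k * 2 ^ k * (2 ^ (m - k) - (1::nat))"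
      using c1 c2 c3 cardV by linarith
    have e1: "(2::nat) ^ k * 2 ^ k * 2 ^ (m - k) = 2 ^ (m + k)"
    proof -
      have "k + k + (m - k) = m + k" using mk by simp
      then show ?thesis by (metis power_add)
    qed
    have e2: "(2::nat) ^ k * 2 ^ k * (2 ^ (m - k) - 1) = 2 ^ k * 2 ^ k * 2 ^ (m - k) - 2 ^ k * 2 ^ k"
      by (rule right_diff_distrib'[where c=1, simplified])
    have e3: "(0::nat) < 2 ^ k * 2 ^ k" by simp
    have e4: "(2::nat) ^ k * 2 ^ k \<le> 2 ^ k * 2 ^ k * 2 ^ (m - k)" by simp
    show False using ineq e1 e2 e3 e4 by linarith
  qed
  then obtain q where Qc: "2 ^ (m - k) \<le> card {e \<in> V. snd e = q}" by blast
  define Q where "Q = {e \<in> V. snd e = q}"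
  have "0 < card Q" using Qc unfolding Q_def
    by (rule order.strict_trans2[rotated]) simp
  then have "Q \<noteq> {}" by auto
  then obtain e0 where e0: "e0 \<in> Q" by blast
  define A where "A = (\<lambda>e. fst e - fst e0) ` Q"
  have injQ: "inj_on (\<lambda>e. fst e - fst e0) Q"
  proof (rule inj_onI)
    fix e e' assume "e \<in> Q" "e' \<in> Q" "fst e - fst e0 = fst e' - fst e0"
    then have "fst e = fst e'" "snd e = snd e'" unfolding Q_def by auto
    then show "e = e'" by (rule prod_eqI)
  qed
  have "(8::nat) \<le> 2 ^ (m - k)"
  proof -
    have "(2::nat) ^ 3 \<le> 2 ^ (m - k)" using mk by (intro power_increasing) auto
    then show ?thesis by simp
  qed
  then have cA8: "8 \<le> card A" unfolding A_def using card_image[OF injQ] Qc Q_def by simp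
  have AV: "(a, 0) \<in> V" if av: "a \<in> A" for a
  proof -
    obtain e where e: "e \<in> Q" "a = fst e - fst e0" using av A_def by auto
    have "snd e = snd e0" using e e0 unfolding Q_def by simp
    then have "(a, 0) = e - e0" using e by (simp add: prod_eq_iff)
    then show ?thesis using Vsub e(1) e0 unfolding Q_def by auto
  qed
  have m2: "m \<ge> 2" and m3: "m \<ge> 3" and m0: "m > 0" using m4 by auto
  have nT0: "\<not> Tr1 k (0::'b)" by (rule Tr1_zero[OF k0])
  obtain s :: 'b where s: "Tr1 k s" using Tr1_exists[OF cB k0] by blast
  have f0: "?f ((x, y), (0, 0)) = Tr1 m (x * inverse y)" for x y
    using fz_0[OF cA m2 nT0] nT0 by (simp add: cor_f_def)
  have f1: "?f ((x, y), (0, s)) = Tr1 m (y * inverse x)" for x y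
    using fz_1[OF cA m2 s] nT0 by (simp add: cor_f_def)
  have P2: "snd a = 0 \<or> snd a' = 0 \<or> snd a = snd a'" if aa: "a \<in> A" "a' \<in> A" for a a'
  proof -
    obtain a1 a2 where a: "a = (a1, a2)" by fastforce
    obtain b1 b2 where a': "a' = (b1, b2)" by fastforce
    have "\<forall>x y. ((Tr1 m (x * inverse y) \<noteq> Tr1 m ((x+a1) * inverse (y+a2)))
         = (Tr1 m ((x+b1) * inverse (y+b2)) \<noteq> Tr1 m ((x+a1+b1) * inverse (y+a2+b2))))"
    proof (intro allI)
      fix x y :: 'a
      have "(?f ((x, y), (0, 0)) \<noteq> ?f (((x, y), (0, 0)) + (a, 0)))
          = (?f (((x, y), (0, 0)) + (a', 0)) \<noteq> ?f (((x, y), (0, 0)) + (a, 0) + (a', 0)))"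
        by (rule Vdd[OF AV[OF aa(1)] AV[OF aa(2)]])
      then show "((Tr1 m (x * inverse y) \<noteq> Tr1 m ((x+a1) * inverse (y+a2)))
         = (Tr1 m ((x+b1) * inverse (y+b2)) \<noteq> Tr1 m ((x+a1+b1) * inverse (y+a2+b2))))"
        using f0 a a' by (simp add: zero_prod_def)
    qed
    from DD_inv[OF cA m3 this] show ?thesis using a a' by simp
  qed
  have P1: "fst a = 0 \<or> fst a' = 0 \<or> fst a = fst a'" if aa: "a \<in> A" "a' \<in> A" for a a'
  proof -
    obtain a1 a2 where a: "a = (a1, a2)" by fastforce
    obtain b1 b2 where a': "a' = (b1, b2)" by fastforce
    have "\<forall>x y. ((Tr1 m (x * inverse y) \<noteq> Tr1 m ((x+a2) * inverse (y+a1)))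
         = (Tr1 m ((x+b2) * inverse (y+b1)) \<noteq> Tr1 m ((x+a2+b2) * inverse (y+a1+b1))))"
    proof (intro allI)
      fix x y :: 'a
      have "(?f ((y, x), (0, s)) \<noteq> ?f (((y, x), (0, s)) + (a, 0)))
          = (?f (((y, x), (0, s)) + (a', 0)) \<noteq> ?f (((y, x), (0, s)) + (a, 0) + (a', 0)))"
        by (rule Vdd[OF AV[OF aa(1)] AV[OF aa(2)]])
      then show "((Tr1 m (x * inverse y) \<noteq> Tr1 m ((x+a2) * inverse (y+a1)))
         = (Tr1 m ((x+b2) * inverse (y+b1)) \<noteq> Tr1 m ((x+a2+b2) * inverse (y+a1+b1))))"
        using f1 a a' by (simp add: zero_prod_def)
    qed
    from DD_inv[OF cA m3 this] show ?thesis using a a' by simp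
  qed
  have c2: "card (snd ` A) \<le> 2" by (rule card_le2) (use P2 in blast)
  have c1: "card (fst ` A) \<le> 2" by (rule card_le2) (use P1 in blast)
  have "A \<subseteq> fst ` A \<times> snd ` A"
  proof
    fix p assume "p \<in> A"
    then have "fst p \<in> fst ` A" "snd p \<in> snd ` A" by blast+
    then show "p \<in> fst ` A \<times> snd ` A" by (simp add: mem_Times_iff)
  qed
  then have "card A \<le> card (fst ` A \<times> snd ` A)" by (intro card_mono) auto
  also have "\<dots> = card (fst ` A) * card (snd ` A)" by (rule card_cartesian_product)
  also have "\<dots> \<le> 2 * 2" using c1 c2 by (intro mult_mono) auto
  finally show False using cA8 by simp
qed

theorem corollary3p10:
  fixes m k :: nat
  assumes "card (UNIV :: 'a::{field,finite} set) = 2 ^ m"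
    and "card (UNIV :: 'b::{field,finite} set) = 2 ^ k"
    and "card (UNIV :: 'c::{field,finite} set) = 2 ^ (m + k)"
    and "k > 0" and "m \<ge> 4" and "m > k + 2"
  shows "is_GMM k (cor_f m k :: ('a \<times> 'a) \<times> 'b \<times> 'b \<Rightarrow> bool)
    \<and> \<not> MM_sharp (m + k) TYPE('c) (cor_f m k :: ('a \<times> 'a) \<times> 'b \<times> 'b \<Rightarrow> bool)"
proof
  show "is_GMM k (cor_f m k :: ('a \<times> 'a) \<times> 'b \<times> 'b \<Rightarrow> bool)"
    by (rule GMM_part[OF assms(1)]) (use assms(5) in simp)
  show "\<not> MM_sharp (m + k) TYPE('c) (cor_f m k :: ('a \<times> 'a) \<times> 'b \<times> 'b \<Rightarrow> bool)"
    by (rule not_MMs[OF assms])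
qed

end
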